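(* Over all 3-periodics of $\mathcal{E}$, the circumcenter $X_3^\dagger$ of the focus-inversive triangle moves on the circle with center and radius \[C_3^\dagger=\left(-c\left(1+\rho^2\frac{a^2+b^2}{2b^4}\right),0\right),\qquad R_3^\dagger=\rho^2\,\frac{a(\delta-b^2)}{2b^4}.\]
   Context: Let $a>b>0$ and let $\mathcal{E}$ be the ellipse $x^2/a^2+y^2/b^2=1$. Set $c=\sqrt{a^2-b^2}$, $\delta=\sqrt{a^4-a^2b^2+b^4}$, and let the foci be $f_1=(-c,0)$, $f_2=(c,0)$. A 3-periodic is a triangle $P_1P_2P_3$ with vertices on $\mathcal{E}$ such that at each vertex the normal to $\mathcal{E}$ bisects the angle formed by the two sides meeting at that vertex; these form a one-parameter family (one through every point of $\mathcal{E}$). Fix $\rho>0$; the focus-inversive triangle has vertices $P_i^\dagger=f_1+(\rho/d_{1,i})^2(P_i-f_1)$, $d_{1,i}=|P_i-f_1|$. *)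

theory Defs
  imports "HOL-Analysis.Analysis"
begin

text \<open>Points of the plane are pairs of reals; dist / norm / inner on real \<times> real are Euclidean.\<close>

definition on_ellipse :: "real \<Rightarrow> real \<Rightarrow> real \<times> real \<Rightarrow> bool" where
  "on_ellipse a b P \<longleftrightarrow> (fst P)\<^sup>2 / a\<^sup>2 + (snd P)\<^sup>2 / b\<^sup>2 = 1"

text \<open>A normal vector to the ellipse at P (gradient of the defining function, up to factor 2).\<close>
definition ellipse_normal :: "real \<Rightarrow> real \<Rightarrow> real \<times> real \<Rightarrow> real \<times> real" where
  "ellipse_normal a b P = (fst P / a\<^sup>2, snd P / b\<^sup>2)"

text \<open>At vertex P with neighbours Q and R the normal line bisects the angle QPR:
  the unit vectors from P towards Q and R make equal angles with the normal.\<close>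
definition normal_bisects :: "real \<Rightarrow> real \<Rightarrow> real \<times> real \<Rightarrow> real \<times> real \<Rightarrow> real \<times> real \<Rightarrow> bool" where
  "normal_bisects a b P Q R \<longleftrightarrow>
     ((Q - P) \<bullet> ellipse_normal a b P) / norm (Q - P)
       = ((R - P) \<bullet> ellipse_normal a b P) / norm (R - P)"

definition three_periodic :: "real \<Rightarrow> real \<Rightarrow> real \<times> real \<Rightarrow> real \<times> real \<Rightarrow> real \<times> real \<Rightarrow> bool" where
  "three_periodic a b P1 P2 P3 \<longleftrightarrow>
     on_ellipse a b P1 \<and> on_ellipse a b P2 \<and> on_ellipse a b P3 \<and>
     P1 \<noteq> P2 \<and> P2 \<noteq> P3 \<and> P1 \<noteq> P3 \<and>
     normal_bisects a b P1 P2 P3 \<and> normal_bisects a b P2 P3 P1 \<and> normal_bisects a b P3 P1 P2"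

definition invert :: "real \<times> real \<Rightarrow> real \<Rightarrow> real \<times> real \<Rightarrow> real \<times> real" where
  "invert f \<rho> P = f + (\<rho> / dist P f)\<^sup>2 *\<^sub>R (P - f)"

definition is_circumcenter :: "real \<times> real \<Rightarrow> real \<times> real \<Rightarrow> real \<times> real \<Rightarrow> real \<times> real \<Rightarrow> bool" where
  "is_circumcenter X A B C \<longleftrightarrow> dist X A = dist X B \<and> dist X B = dist X C"

end

theory Submission
  imports Defs
begin



definition lam :: "real \<Rightarrow> real \<Rightarrow> real \<times> real \<Rightarrow> real \<times> real \<Rightarrow> real" where
  "lam a b P Q = (a\<^sup>2*(snd Q - snd P)\<^sup>2 + b\<^sup>2*(fst P - fst Q)\<^sup>2
      - ((snd Q - snd P)*fst P + (fst P - fst Q)* snd P)\<^sup>2) / ((snd Q - snd P)\<^sup>2 + (fst P - fst Q)\<^sup>2)"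

lemma lam_sym: "lam a b P Q = lam a b Q P"
proof -
  have "((snd Q - snd P)*fst P + (fst P - fst Q)* snd P)\<^sup>2 = ((snd P - snd Q)*fst Q + (fst Q - fst P)* snd Q)\<^sup>2"
    by (simp add: power2_eq_square algebra_simps)
  thus ?thesis unfolding lam_def by (simp add: power2_commute)
qed

lemma lam_formula:
  fixes a b x y x2 y2 :: real
  assumes e: "x\<^sup>2/a\<^sup>2 + y\<^sup>2/b\<^sup>2 = 1" and a: "a > 0" and b: "b > 0"
  shows "(a\<^sup>2*(y2 - y)\<^sup>2 + b\<^sup>2*(x - x2)\<^sup>2 - ((y2 - y)*x + (x - x2)*y)\<^sup>2) * ((x/a\<^sup>2)\<^sup>2 + (y/b\<^sup>2)\<^sup>2)
     = (a\<^sup>2+b\<^sup>2-x\<^sup>2-y\<^sup>2) * ((x2 - x)*(x/a\<^sup>2) + (y2 - y)*(y/b\<^sup>2))\<^sup>2"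
proof -
  have e': "b\<^sup>2*x\<^sup>2 + a\<^sup>2*y\<^sup>2 = a\<^sup>2*b\<^sup>2" using e a b by (simp add: field_simps)
  show ?thesis using a b e' by (simp add: field_simps) algebra
qed

lemma lam_complex_poly0:
  fixes zi zj wi wj Xi Yi Xj Yj a b :: complex
  assumes "zi*wi = 1" "zj*wj = 1"
    and "2*Xi = a*(zi + wi)" and "2*Yi = b*(zi - wi)"
    and "2*Xj = a*(zj + wj)" and "2*Yj = b*(zj - wj)"
  shows "(-(a^2)*(Yj-Yi)^2 + b^2*(Xi-Xj)^2 + (Yj*Xi - Xj*Yi)^2)
     * (2*(b^2+a^2)*(zi*zj) + (b^2-a^2)*((zi*zj)^2+1))
     = -(((zi - zj)^2) * (-((Yj-Yi)^2) + (Xi-Xj)^2)) * a^2*b^2"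
  using assms by algebra

lemma lam_complex:
  fixes zi zj :: complex and a b xi yi xj yj l :: real
  assumes zi: "zi \<noteq> 0" and zj: "zj \<noteq> 0"
    and xi: "complex_of_real xi = a*(zi + inverse zi)/2" and yi: "\<i> * complex_of_real yi = b*(zi - inverse zi)/2"
    and xj: "complex_of_real xj = a*(zj + inverse zj)/2" and yj: "\<i> * complex_of_real yj = b*(zj - inverse zj)/2"
    and a: "a \<noteq> 0" and b: "b \<noteq> 0"
    and D: "(yj - yi)\<^sup>2 + (xi - xj)\<^sup>2 \<noteq> 0"
    and L: "l * ((yj - yi)\<^sup>2 + (xi - xj)\<^sup>2) = a\<^sup>2*(yj - yi)\<^sup>2 + b\<^sup>2*(xi - xj)\<^sup>2 - ((yj - yi)*xi + (xi - xj)*yi)\<^sup>2"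
  shows "(zi - zj)^2 + complex_of_real (l*(1/a\<^sup>2-1/b\<^sup>2))*((zi*zj)^2+1) + 2*complex_of_real (l*(1/a\<^sup>2+1/b\<^sup>2))*(zi*zj) = 0"
proof -
  define Xi where "Xi = complex_of_real xi"
  define Xj where "Xj = complex_of_real xj"
  define Yi where "Yi = \<i> * complex_of_real yi"
  define Yj where "Yj = \<i> * complex_of_real yj"
  define Dn where "Dn = (yj - yi)\<^sup>2 + (xi - xj)\<^sup>2"
  define W where "W = zi*zj"
  have c1: "complex_of_real (a\<^sup>2*(yj - yi)\<^sup>2 + b\<^sup>2*(xi - xj)\<^sup>2 - ((yj - yi)*xi + (xi - xj)*yi)\<^sup>2)
     = -(of_real a^2)*(Yj-Yi)^2 + of_real b^2*(Xi-Xj)^2 + (Yj*Xi - Xj*Yi)^2"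
    unfolding Xi_def Xj_def Yi_def Yj_def by (simp add: power2_eq_square algebra_simps)
  have c2: "complex_of_real Dn = -((Yj-Yi)^2) + (Xi-Xj)^2"
    unfolding Xi_def Xj_def Yi_def Yj_def Dn_def by (simp add: power2_eq_square algebra_simps)
  have h1: "2*Xi = of_real a*(zi + inverse zi)" using xi Xi_def by (simp add: algebra_simps)
  have h2: "2*Yi = of_real b*(zi - inverse zi)" using yi Yi_def by (simp add: algebra_simps)
  have h3: "2*Xj = of_real a*(zj + inverse zj)" using xj Xj_def by (simp add: algebra_simps)
  have h4: "2*Yj = of_real b*(zj - inverse zj)" using yj Yj_def by (simp add: algebra_simps)
  have P: "(-(of_real a^2)*(Yj-Yi)^2 + of_real b^2*(Xi-Xj)^2 + (Yj*Xi - Xj*Yi)^2)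
     * (2*(of_real b^2+ of_real a^2)*(zi*zj) + (of_real b^2- of_real a^2)*((zi*zj)^2+1))
     = -(((zi - zj)^2) * (-((Yj-Yi)^2) + (Xi-Xj)^2)) * of_real a^2* of_real b^2"
    by (rule lam_complex_poly0) (use zi zj h1 h2 h3 h4 in auto)
  have L': "complex_of_real l * of_real Dn = complex_of_real (a\<^sup>2*(yj - yi)\<^sup>2 + b\<^sup>2*(xi - xj)\<^sup>2 - ((yj - yi)*xi + (xi - xj)*yi)\<^sup>2)"
    using L Dn_def by (metis of_real_mult)
  have "of_real Dn * (of_real l * (2*(of_real b^2+ of_real a^2)*W + (of_real b^2- of_real a^2)*(W^2+1)) + (zi-zj)^2 * of_real a^2* of_real b^2) = (0::complex)"
    using P unfolding c1[symmetric] c2[symmetric] L'[symmetric] W_def by (simp add: algebra_simps)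
  moreover have Dn0: "complex_of_real Dn \<noteq> 0" using D unfolding Dn_def of_real_eq_0_iff .
  ultimately have E: "of_real l * (2*(of_real b^2+ of_real a^2)*W + (of_real b^2- of_real a^2)*(W^2+1)) + (zi-zj)^2 * of_real a^2* of_real b^2 = (0::complex)"
    by (metis mult_eq_0_iff)
  have "(zi - zj)^2 + complex_of_real (l*(1/a\<^sup>2-1/b\<^sup>2))*(W^2+1) + 2*complex_of_real (l*(1/a\<^sup>2+1/b\<^sup>2))*W
     = (of_real l * (2*(of_real b^2+ of_real a^2)*W + (of_real b^2- of_real a^2)*(W^2+1)) + (zi-zj)^2 * of_real a^2* of_real b^2) / (of_real a^2 * of_real b^2)"
    using a b by (simp add: field_simps) (auto simp: algebra_simps eval_nat_numeral)
  thus ?thesis using E W_def by simp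
qed




lemma cayley_core:
  fixes z1 z2 z3 t q :: complex
  assumes R12: "(z1-z2)^2 + t*((z1*z2)^2+1) + 2*q*z1*z2 = 0"
      and R13: "(z1-z3)^2 + t*((z1*z3)^2+1) + 2*q*z1*z3 = 0"
      and R23: "(z2-z3)^2 + t*((z2*z3)^2+1) + 2*q*z2*z3 = 0"
      and d23: "z2 \<noteq> z3"
  shows "(1 + t*z1^2)*(z2+z3) + 2*z1*(q-1) = 0"
    and "(1 + t*z1^2)*(z2*z3) = z1^2 + t"
    and "(3 - 2*q - t^2) * (t*(1+z1^4) + 2*q*z1^2) = 0"
proof -
  define A where "A = 1 + t*z1^2"
  define B where "B = 2*z1*(q-1)"
  define C where "C = z1^2 + t"
  have Q2: "A*z2^2 + B*z2 + C = 0" using R12 unfolding A_def B_def C_def by (simp add: algebra_simps power2_eq_square)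
  have Q3: "A*z3^2 + B*z3 + C = 0" using R13 unfolding A_def B_def C_def by (simp add: algebra_simps power2_eq_square)
  have "(z2 - z3)*(A*(z2+z3) + B) = 0" using Q2 Q3 by (simp add: algebra_simps power2_eq_square) (metis add.commute add_diff_cancel_left diff_add_cancel)
  hence S: "A*(z2+z3) + B = 0" using d23 by simp
  thus "(1 + t*z1^2)*(z2+z3) + 2*z1*(q-1) = 0" unfolding A_def B_def .
  have P: "A*(z2*z3) = C"
  proof -
    have "B = -A*(z2+z3)" using S by (simp add: algebra_simps eq_neg_iff_add_eq_0)
    with Q2 show ?thesis by (simp add: algebra_simps power2_eq_square)
  qed
  thus "(1 + t*z1^2)*(z2*z3) = z1^2 + t" unfolding A_def C_def .
  have "A^2 * ((z2-z3)^2 + t*((z2*z3)^2+1) + 2*q*z2*z3) = 0" using R23 by simp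
  hence "(A*(z2+z3))^2 - 4*A*(A*(z2*z3)) + t*((A*(z2*z3))^2 + A^2) + 2*q*A*(A*(z2*z3)) = 0"
    by (simp add: algebra_simps power2_eq_square)
  hence "B^2 - 4*A*C + t*(C^2+A^2) + 2*q*A*C = 0"
    using S P by (simp add: eq_neg_iff_add_eq_0[symmetric])
  thus "(3 - 2*q - t^2) * (t*(1+z1^4) + 2*q*z1^2) = 0"
    unfolding A_def B_def C_def by algebra
qed




lemma sig_sp:
  fixes z1 z2 z3 :: complex
  assumes "z1 \<noteq> 0" "z2 \<noteq> 0" "z3 \<noteq> 0"
  shows "z1+z2+z3+1/(z1*z2*z3) = z1 + (z2+z3) + 1/(z1*(z2*z3))"
    and "z1*z2+z1*z3+z1*(1/(z1*z2*z3))+z2*z3+z2*(1/(z1*z2*z3))+z3*(1/(z1*z2*z3)) = z1*(z2+z3) + z2*z3 + (z1 + (z2+z3))/(z1*(z2*z3))"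
    and "z1*z2*z3+z1*z2*(1/(z1*z2*z3))+z1*z3*(1/(z1*z2*z3))+z2*z3*(1/(z1*z2*z3)) = z1*(z2*z3) + (z2+z3)/(z2*z3) + 1/z1"
  using assms by (simp_all add: field_simps)

lemma sp_subst:
  fixes z1 sv pv t q :: complex
  assumes c: "t^2 + 2*q = 3" and A: "1 + t*z1^2 \<noteq> 0"
    and S: "(1 + t*z1^2)* sv + 2*z1*(q-1) = 0" and P: "(1 + t*z1^2)*pv = z1^2 + t"
  shows "sv = -z1*(1-t^2)/(1+t*z1^2)" "pv = (z1^2+t)/(1+t*z1^2)"
proof -
  have q2: "2*q = 3 - t^2" using c add_diff_cancel_left'[of "t^2" "2*q"] by simp
  have "2*z1*(q-1) = z1*(2*q - 2)" by (simp add: algebra_simps)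
  also have "\<dots> = z1*(1-t^2)" unfolding q2 by simp
  finally have E: "2*z1*(q-1) = z1*(1-t^2)" .
  have "(1 + t*z1^2)* sv = -(z1*(1-t^2))" using S unfolding E by (simp add: eq_neg_iff_add_eq_0)
  thus "sv = -z1*(1-t^2)/(1+t*z1^2)" using A by (simp add: field_simps)
  show "pv = (z1^2+t)/(1+t*z1^2)" using P A by (simp add: field_simps)
qed



lemma pow6: "(z::'a::monoid_mult)^6 = z*(z*(z*(z*(z*z))))" by (simp add: eval_nat_numeral)


lemma sig2:
  fixes z t A C :: complex
  assumes A: "A \<noteq> 0" and C: "C \<noteq> 0" and z: "z \<noteq> 0" and Ad: "A = 1 + t*z^2" and Cd: "C = z^2+t"
  shows "z*(-z*(1-t^2)/A) + C/A + (z + (-z*(1-t^2)/A))/(z*(C/A)) = 2*t"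
proof -
  have "z*(-z*(1-t^2)/A) + C/A = t"
    using A by (simp add: field_simps) (simp add: Ad Cd algebra_simps power2_eq_square)
  moreover have "(z + (-z*(1-t^2)/A))/(z*(C/A)) = t"
    using A C z by (simp add: field_simps) (simp add: Ad Cd algebra_simps power2_eq_square)
  ultimately show ?thesis by simp
qed

lemma uval:
  fixes z t A C :: complex
  assumes A: "A \<noteq> 0" and C: "C \<noteq> 0" and z: "z \<noteq> 0" and Ad: "A = 1 + t*z^2" and Cd: "C = z^2+t"
  shows "z + (-z*(1-t^2)/A) + 1/(z*(C/A)) = (1 + t*(2+t^2)*z^2 + 3*t^2*z^4 + t*z^6)/(z*(A*C))"
  using A C z by (simp add: field_simps) (simp add: Ad Cd algebra_simps power2_eq_square power4_eq_xxxx pow6)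

lemma vval:
  fixes z t A C :: complex
  assumes A: "A \<noteq> 0" and C: "C \<noteq> 0" and z: "z \<noteq> 0" and Ad: "A = 1 + t*z^2" and Cd: "C = z^2+t"
  shows "z*(C/A) + (-z*(1-t^2)/A)/(C/A) + 1/z = (z^6 + t*(2+t^2)*z^4 + 3*t^2*z^2 + t)/(z*(A*C))"
  using A C z by (simp add: field_simps) (simp add: Ad Cd algebra_simps power2_eq_square power4_eq_xxxx pow6)

lemma upv:
  fixes z t M :: complex
  shows "(1 + t*(2+t^2)*z^2 + 3*t^2*z^4 + t*z^6)/M + (z^6 + t*(2+t^2)*z^4 + 3*t^2*z^2 + t)/M = (1+t)*(1+z^2)*(z^4+(t^2+2*t-1)*z^2+1)/M"
  by (simp add: add_divide_distrib[symmetric]) algebra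

lemma umv:
  fixes z t M :: complex
  shows "(1 + t*(2+t^2)*z^2 + 3*t^2*z^4 + t*z^6)/M - (z^6 + t*(2+t^2)*z^4 + 3*t^2*z^2 + t)/M = (1-t)*(1-z^2)*(z^4+(1+2*t-t^2)*z^2+1)/M"
  by (simp add: diff_divide_distrib[symmetric]) algebra

lemma locus_poly:
  fixes z t :: complex
  shows "((1+z^2)*(z^4+(t^2+2*t-1)*z^2+1))^2 - ((1-z^2)*(z^4+(1+2*t-t^2)*z^2+1))^2 = 4*z^2*((1+t*z^2)*(z^2+t))^2"
  by algebra



lemma collinear_equidist:
  fixes r1x r1y r2x r2y r3x r3y Zx Zy :: real
  assumes cr: "(r2x - r1x)*(r3y - r1y) - (r2y - r1y)*(r3x - r1x) = 0"
    and e12: "(Zx - r1x)^2 + (Zy - r1y)^2 = (Zx - r2x)^2 + (Zy - r2y)^2"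
    and e13: "(Zx - r1x)^2 + (Zy - r1y)^2 = (Zx - r3x)^2 + (Zy - r3y)^2"
    and d12: "(r1x, r1y) \<noteq> (r2x, r2y)" and d13: "(r1x, r1y) \<noteq> (r3x, r3y)" and d23: "(r2x, r2y) \<noteq> (r3x, r3y)"
  shows False
proof -
  define m1 where "m1 = r2x - r1x"
  define m2 where "m2 = r2y - r1y"
  define w1 where "w1 = r3x - r1x"
  define w2 where "w2 = r3y - r1y"
  define g1 where "g1 = Zx - r1x"
  define g2 where "g2 = Zy - r1y"
  have cr': "m1*w2 = m2*w1" using cr unfolding m1_def m2_def w1_def w2_def by simp
  have E1: "2*(g1*m1 + g2*m2) = m1^2 + m2^2" using e12 unfolding m1_def m2_def g1_def g2_def by (simp add: power2_eq_square algebra_simps)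
  have E2: "2*(g1*w1 + g2*w2) = w1^2 + w2^2" using e13 unfolding w1_def w2_def g1_def g2_def by (simp add: power2_eq_square algebra_simps)
  have vnz: "m1^2 + m2^2 \<noteq> 0" using d12 unfolding m1_def m2_def by (auto simp: power2_eq_square)
  define dvw where "dvw = m1*w1 + m2*w2"
  have lin1: "(m1^2+m2^2)*w1 = dvw*m1" unfolding dvw_def using cr' by (simp add: power2_eq_square algebra_simps)
  have lin2: "(m1^2+m2^2)*w2 = dvw*m2" unfolding dvw_def using cr' by (simp add: power2_eq_square algebra_simps)
  have "(m1^2+m2^2)*(2*(g1*w1 + g2*w2)) = 2*g1*((m1^2+m2^2)*w1) + 2*g2*((m1^2+m2^2)*w2)"
    by (simp add: algebra_simps)
  also have "\<dots> = 2*g1*(dvw*m1) + 2*g2*(dvw*m2)" using lin1 lin2 by simp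
  also have "\<dots> = dvw*(2*(g1*m1 + g2*m2))" by (simp add: algebra_simps)
  finally have "(m1^2+m2^2)*(2*(g1*w1 + g2*w2)) = dvw*(2*(g1*m1 + g2*m2))" .
  hence "(m1^2+m2^2)*(w1^2+w2^2) = dvw*(m1^2+m2^2)" using E1 E2 by simp
  hence ww: "w1^2+w2^2 = dvw" using vnz by (metis mult.commute mult_left_cancel)
  have "(m1^2+m2^2)*(w1^2+w2^2) = dvw^2 + (m1*w2 - m2*w1)^2" unfolding dvw_def
    by (simp add: power2_eq_square algebra_simps)
  hence cs: "(m1^2+m2^2)*(w1^2+w2^2) = dvw^2" using cr' by simp
  hence "(m1^2+m2^2)*dvw = dvw^2" using ww by simp
  hence "dvw*(dvw - (m1^2+m2^2)) = 0" by (simp add: power2_eq_square algebra_simps)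
  hence "dvw = 0 \<or> dvw = m1^2+m2^2" by simp
  thus False
  proof
    assume "dvw = 0"
    hence "w1^2 + w2^2 = 0" using ww by simp
    hence "w1 = 0 \<and> w2 = 0" by (simp add: sum_squares_eq_zero_iff)
    thus False using d13 unfolding w1_def w2_def by simp
  next
    assume h: "dvw = m1^2+m2^2"
    have "(w1-m1)^2 + (w2-m2)^2 = (w1^2+w2^2) - 2*dvw + (m1^2+m2^2)" unfolding dvw_def by (simp add: power2_eq_square algebra_simps)
    hence "(w1-m1)^2 + (w2-m2)^2 = 0" using ww h by simp
    hence "w1 - m1 = 0 \<and> w2 - m2 = 0" by (simp add: sum_squares_eq_zero_iff)
    thus False using d23 unfolding w1_def w2_def m1_def m2_def by simp
  qed
qed




lemma inv_key:
  fixes qx qy Y1 Y2 pw \<rho> :: real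
  assumes n: "qx^2+qy^2 \<noteq> 0" and c: "qx^2+qy^2 - 2*Y1*qx - 2*Y2*qy + pw = 0"
  shows "pw*((\<rho>^2*qx/(qx^2+qy^2))^2 + (\<rho>^2*qy/(qx^2+qy^2))^2)
        - 2*\<rho>^2*(Y1*(\<rho>^2*qx/(qx^2+qy^2)) + Y2*(\<rho>^2*qy/(qx^2+qy^2))) + \<rho>^4 = 0"
proof -
  define n' where "n' = qx^2+qy^2"
  have np: "n' \<noteq> 0" using n n'_def by simp
  have s: "(\<rho>^2*qx/n')^2 + (\<rho>^2*qy/n')^2 = \<rho>^4/n'"
    using np unfolding n'_def[symmetric] by (simp add: field_simps power2_eq_square) (simp add: n'_def power2_eq_square power4_eq_xxxx algebra_simps)
  have "pw*((\<rho>^2*qx/n')^2 + (\<rho>^2*qy/n')^2)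
        - 2*\<rho>^2*(Y1*(\<rho>^2*qx/n') + Y2*(\<rho>^2*qy/n')) + \<rho>^4
        = \<rho>^4*(pw - 2*(Y1*qx+Y2*qy) + n')/n'"
    unfolding s using np by (simp add: field_simps)
  also have "pw - 2*(Y1*qx+Y2*qy) + n' = 0" using c unfolding n'_def by simp
  finally show ?thesis unfolding n'_def by simp
qed

lemma inv_back:
  fixes qx qy \<rho> :: real
  assumes n: "qx^2+qy^2 \<noteq> 0" and r: "\<rho> > 0"
  shows "\<rho>^2*(\<rho>^2*qx/(qx^2+qy^2)) / ((\<rho>^2*qx/(qx^2+qy^2))^2 + (\<rho>^2*qy/(qx^2+qy^2))^2) = qx"
    and "\<rho>^2*(\<rho>^2*qy/(qx^2+qy^2)) / ((\<rho>^2*qx/(qx^2+qy^2))^2 + (\<rho>^2*qy/(qx^2+qy^2))^2) = qy"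
proof -
  define n' where "n' = qx^2+qy^2"
  have np: "n' \<noteq> 0" using n n'_def by simp
  have s: "(\<rho>^2*qx/n')^2 + (\<rho>^2*qy/n')^2 = \<rho>^4/n'"
    using np unfolding n'_def[symmetric] by (simp add: field_simps power2_eq_square) (simp add: n'_def power2_eq_square power4_eq_xxxx algebra_simps)
  show "\<rho>^2*(\<rho>^2*qx/(qx^2+qy^2)) / ((\<rho>^2*qx/(qx^2+qy^2))^2 + (\<rho>^2*qy/(qx^2+qy^2))^2) = qx"
    unfolding n'_def[symmetric] s using np r by (simp add: field_simps power4_eq_xxxx power2_eq_square)
  show "\<rho>^2*(\<rho>^2*qy/(qx^2+qy^2)) / ((\<rho>^2*qx/(qx^2+qy^2))^2 + (\<rho>^2*qy/(qx^2+qy^2))^2) = qy"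
    unfolding n'_def[symmetric] s using np r by (simp add: field_simps power4_eq_xxxx power2_eq_square)
qed

lemma cross_inv:
  fixes q1x q1y q2x q2y q3x q3y Y1 Y2 pw \<rho> :: real
  assumes n1: "q1x^2+q1y^2 \<noteq> 0" and n2: "q2x^2+q2y^2 \<noteq> 0" and n3: "q3x^2+q3y^2 \<noteq> 0"
    and c1: "q1x^2+q1y^2 - 2*Y1*q1x - 2*Y2*q1y + pw = 0"
    and c2: "q2x^2+q2y^2 - 2*Y1*q2x - 2*Y2*q2y + pw = 0"
    and c3: "q3x^2+q3y^2 - 2*Y1*q3x - 2*Y2*q3y + pw = 0"
  shows "((\<rho>^2*q2x/(q2x^2+q2y^2)) - (\<rho>^2*q1x/(q1x^2+q1y^2))) * ((\<rho>^2*q3y/(q3x^2+q3y^2)) - (\<rho>^2*q1y/(q1x^2+q1y^2)))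
       - ((\<rho>^2*q2y/(q2x^2+q2y^2)) - (\<rho>^2*q1y/(q1x^2+q1y^2))) * ((\<rho>^2*q3x/(q3x^2+q3y^2)) - (\<rho>^2*q1x/(q1x^2+q1y^2)))
     = -(\<rho>^4*pw*((q2x-q1x)*(q3y-q1y) - (q2y-q1y)*(q3x-q1x))) / ((q1x^2+q1y^2)*(q2x^2+q2y^2)*(q3x^2+q3y^2))"
proof -
  define n1' where "n1' = q1x^2+q1y^2"
  define n2' where "n2' = q2x^2+q2y^2"
  define n3' where "n3' = q3x^2+q3y^2"
  have N1: "n1' = 2*(Y1*q1x + Y2*q1y) - pw" using c1 n1'_def by simp
  have N2: "n2' = 2*(Y1*q2x + Y2*q2y) - pw" using c2 n2'_def by simp
  have N3: "n3' = 2*(Y1*q3x + Y2*q3y) - pw" using c3 n3'_def by simp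
  have h1: "n1' \<noteq> 0" "n2' \<noteq> 0" "n3' \<noteq> 0" using n1 n2 n3 n1'_def n2'_def n3'_def by auto
  have "((\<rho>^2*q2x/n2') - (\<rho>^2*q1x/n1')) * ((\<rho>^2*q3y/n3') - (\<rho>^2*q1y/n1'))
       - ((\<rho>^2*q2y/n2') - (\<rho>^2*q1y/n1')) * ((\<rho>^2*q3x/n3') - (\<rho>^2*q1x/n1'))
     = \<rho>^4*((q1x*q2y - q1y*q2x)*n3' + (q2x*q3y-q2y*q3x)*n1' + (q3x*q1y - q3y*q1x)*n2') / (n1'*n2'*n3')"
    using h1 by (simp add: field_simps)
  also have "(q1x*q2y - q1y*q2x)*n3' + (q2x*q3y-q2y*q3x)*n1' + (q3x*q1y - q3y*q1x)*n2'
      = -(pw*((q2x-q1x)*(q3y-q1y) - (q2y-q1y)*(q3x-q1x)))"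
    unfolding N1 N2 N3 by (simp add: algebra_simps)
  finally show ?thesis unfolding n1'_def n2'_def n3'_def by simp
qed




lemma inv_core:
  fixes q1x q1y q2x q2y q3x q3y Y1 Y2 pw \<rho> Zx Zy :: real
  assumes r: "\<rho> > 0"
    and n1: "q1x^2+q1y^2 \<noteq> 0" and n2: "q2x^2+q2y^2 \<noteq> 0" and n3: "q3x^2+q3y^2 \<noteq> 0"
    and c1: "q1x^2+q1y^2 - 2*Y1*q1x - 2*Y2*q1y + pw = 0"
    and c2: "q2x^2+q2y^2 - 2*Y1*q2x - 2*Y2*q2y + pw = 0"
    and c3: "q3x^2+q3y^2 - 2*Y1*q3x - 2*Y2*q3y + pw = 0"
    and d12: "(q1x,q1y) \<noteq> (q2x,q2y)" and d13: "(q1x,q1y) \<noteq> (q3x,q3y)" and d23: "(q2x,q2y) \<noteq> (q3x,q3y)"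
    and crq: "(q2x-q1x)*(q3y-q1y) - (q2y-q1y)*(q3x-q1x) \<noteq> 0"
    and e12: "(Zx - \<rho>^2*q1x/(q1x^2+q1y^2))^2 + (Zy - \<rho>^2*q1y/(q1x^2+q1y^2))^2
            = (Zx - \<rho>^2*q2x/(q2x^2+q2y^2))^2 + (Zy - \<rho>^2*q2y/(q2x^2+q2y^2))^2"
    and e13: "(Zx - \<rho>^2*q1x/(q1x^2+q1y^2))^2 + (Zy - \<rho>^2*q1y/(q1x^2+q1y^2))^2
            = (Zx - \<rho>^2*q3x/(q3x^2+q3y^2))^2 + (Zy - \<rho>^2*q3y/(q3x^2+q3y^2))^2"
  shows "pw \<noteq> 0 \<and> Zx = \<rho>^2*Y1/pw \<and> Zy = \<rho>^2*Y2/pw"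
proof -
  define r1x where "r1x = \<rho>^2*q1x/(q1x^2+q1y^2)"
  define r1y where "r1y = \<rho>^2*q1y/(q1x^2+q1y^2)"
  define r2x where "r2x = \<rho>^2*q2x/(q2x^2+q2y^2)"
  define r2y where "r2y = \<rho>^2*q2y/(q2x^2+q2y^2)"
  define r3x where "r3x = \<rho>^2*q3x/(q3x^2+q3y^2)"
  define r3y where "r3y = \<rho>^2*q3y/(q3x^2+q3y^2)"
  have k1: "pw*(r1x^2+r1y^2) - 2*\<rho>^2*(Y1*r1x + Y2*r1y) + \<rho>^4 = 0"
    unfolding r1x_def r1y_def by (rule inv_key[OF n1 c1])
  have k2: "pw*(r2x^2+r2y^2) - 2*\<rho>^2*(Y1*r2x + Y2*r2y) + \<rho>^4 = 0"
    unfolding r2x_def r2y_def by (rule inv_key[OF n2 c2])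
  have k3: "pw*(r3x^2+r3y^2) - 2*\<rho>^2*(Y1*r3x + Y2*r3y) + \<rho>^4 = 0"
    unfolding r3x_def r3y_def by (rule inv_key[OF n3 c3])
  have b1: "\<rho>^2*r1x/(r1x^2+r1y^2) = q1x" "\<rho>^2*r1y/(r1x^2+r1y^2) = q1y"
    unfolding r1x_def r1y_def using inv_back[OF n1 r] by auto
  have b2: "\<rho>^2*r2x/(r2x^2+r2y^2) = q2x" "\<rho>^2*r2y/(r2x^2+r2y^2) = q2y"
    unfolding r2x_def r2y_def using inv_back[OF n2 r] by auto
  have b3: "\<rho>^2*r3x/(r3x^2+r3y^2) = q3x" "\<rho>^2*r3y/(r3x^2+r3y^2) = q3y"
    unfolding r3x_def r3y_def using inv_back[OF n3 r] by auto
  have rd12: "(r1x,r1y) \<noteq> (r2x,r2y)" using d12 b1 b2 by auto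
  have rd13: "(r1x,r1y) \<noteq> (r3x,r3y)" using d13 b1 b3 by auto
  have rd23: "(r2x,r2y) \<noteq> (r3x,r3y)" using d23 b2 b3 by auto
  have cr: "(r2x - r1x)*(r3y - r1y) - (r2y - r1y)*(r3x - r1x)
     = -(\<rho>^4*pw*((q2x-q1x)*(q3y-q1y) - (q2y-q1y)*(q3x-q1x))) / ((q1x^2+q1y^2)*(q2x^2+q2y^2)*(q3x^2+q3y^2))"
    unfolding r1x_def r1y_def r2x_def r2y_def r3x_def r3y_def by (rule cross_inv[OF n1 n2 n3 c1 c2 c3])
  have E12: "(Zx - r1x)^2 + (Zy - r1y)^2 = (Zx - r2x)^2 + (Zy - r2y)^2" using e12 unfolding r1x_def r1y_def r2x_def r2y_def .
  have E13: "(Zx - r1x)^2 + (Zy - r1y)^2 = (Zx - r3x)^2 + (Zy - r3y)^2" using e13 unfolding r1x_def r1y_def r3x_def r3y_def .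
  have pw0: "pw \<noteq> 0"
  proof
    assume "pw = 0"
    hence "(r2x - r1x)*(r3y - r1y) - (r2y - r1y)*(r3x - r1x) = 0" using cr by simp
    thus False using collinear_equidist[OF _ E12 E13 rd12 rd13 rd23] by blast
  qed
  have crr: "(r2x - r1x)*(r3y - r1y) - (r2y - r1y)*(r3x - r1x) \<noteq> 0"
    unfolding cr using pw0 crq n1 n2 n3 r by simp
  define W1 where "W1 = Zx - \<rho>^2*Y1/pw"
  define W2 where "W2 = Zy - \<rho>^2*Y2/pw"
  have sq: "rx^2 + ry^2 = (2*\<rho>^2*(Y1*rx + Y2*ry) - \<rho>^4)/pw"
    if "pw*(rx^2+ry^2) - 2*\<rho>^2*(Y1*rx + Y2*ry) + \<rho>^4 = 0" for rx ry
    using that pw0 by (simp add: field_simps)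
  have lin: "W1*(ux - r1x) + W2*(uy - r1y) = 0"
    if E: "(Zx - r1x)^2 + (Zy - r1y)^2 = (Zx - ux)^2 + (Zy - uy)^2"
      and k: "pw*(ux^2+uy^2) - 2*\<rho>^2*(Y1*ux + Y2*uy) + \<rho>^4 = 0" for ux uy
  proof -
    have "2*(Zx*(ux - r1x) + Zy*(uy - r1y)) = (ux^2+uy^2) - (r1x^2+r1y^2)"
      using E by (simp add: power2_eq_square algebra_simps)
    also have "\<dots> = 2*\<rho>^2*(Y1*(ux-r1x) + Y2*(uy-r1y))/pw"
      unfolding sq[OF k] sq[OF k1] using pw0 by (simp add: field_simps)
    finally have F: "Zx*(ux - r1x) + Zy*(uy - r1y) = \<rho>^2*(Y1*(ux-r1x) + Y2*(uy-r1y))/pw" by simp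
    have "W1*(ux - r1x) + W2*(uy - r1y) = (Zx*(ux - r1x) + Zy*(uy - r1y)) - \<rho>^2*(Y1*(ux-r1x) + Y2*(uy-r1y))/pw"
      unfolding W1_def W2_def using pw0 by (simp add: field_simps)
    thus ?thesis using F by simp
  qed
  have L2: "W1*(r2x - r1x) + W2*(r2y - r1y) = 0" by (rule lin[OF E12 k2])
  have L3: "W1*(r3x - r1x) + W2*(r3y - r1y) = 0" by (rule lin[OF E13 k3])
  have "W1*((r2x - r1x)*(r3y - r1y) - (r2y - r1y)*(r3x - r1x)) = (r3y - r1y)*(W1*(r2x - r1x) + W2*(r2y - r1y)) - (r2y - r1y)*(W1*(r3x - r1x) + W2*(r3y - r1y))"
    by (simp add: algebra_simps)
  hence "W1 = 0" using L2 L3 crr by simp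
  have "W2*((r2x - r1x)*(r3y - r1y) - (r2y - r1y)*(r3x - r1x)) = (r2x - r1x)*(W1*(r3x - r1x) + W2*(r3y - r1y)) - (r3x - r1x)*(W1*(r2x - r1x) + W2*(r2y - r1y))"
    by (simp add: algebra_simps)
  hence "W2 = 0" using L2 L3 crr by simp
  show ?thesis using pw0 \<open>W1 = 0\<close> \<open>W2 = 0\<close> unfolding W1_def W2_def by simp
qed




lemma final_alg:
  fixes a b c d X1 X2 :: real
  assumes c: "c^2 = a^2 - b^2" and d: "d^2 = a^4 - a^2*b^2 + b^4" and b: "b \<noteq> 0" and ad: "a^2 - d \<noteq> 0"
    and L: "4*a^2*X1^2*(d-b^2)^2 + 4*b^2*X2^2*(a^2-d)^2 = (a^2-d)^2*(d-b^2)^2"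
  shows "((2*b^4)*(X1+c) + c*(a^2+b^2)*(c^2 + 2*c*X1 - d))^2 + (2*b^4)^2*X2^2 = (a*(d-b^2))^2*(c^2 + 2*c*X1 - d)^2"
proof -
  have S: "4*b^2*(a^2-d)^2 \<noteq> 0" using b ad by simp
  have "4*b^2*(a^2-d)^2 * (((2*b^4)*(X1+c) + c*(a^2+b^2)*(c^2 + 2*c*X1 - d))^2 + (2*b^4)^2*X2^2)
      = 4*b^2*(a^2-d)^2 * ((a*(d-b^2))^2*(c^2 + 2*c*X1 - d)^2)"
    using c d L by algebra
  thus ?thesis using S by simp
qed



lemma pt_complex:
  fixes x y a b :: real and z :: complex
  assumes a: "a > 0" and b: "b > 0" and e: "x\<^sup>2/a\<^sup>2 + y\<^sup>2/b\<^sup>2 = 1"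
  defines "z \<equiv> Complex (x/a) (y/b)"
  shows "z \<noteq> 0" "inverse z = cnj z" "complex_of_real x = a*(z + inverse z)/2"
    "\<i> * complex_of_real y = b*(z - inverse z)/2" "Re z = x/a" "Im z = y/b"
proof -
  show re: "Re z = x/a" and im: "Im z = y/b" unfolding z_def by simp_all
  have n1: "(Re z)\<^sup>2 + (Im z)\<^sup>2 = 1" using e re im by (simp add: power_divide)
  have "z * cnj z = 1" unfolding complex_mult_cnj n1 by simp
  thus inv: "inverse z = cnj z" by (rule inverse_unique)
  show "z \<noteq> 0" using \<open>z * cnj z = 1\<close> by auto
  show "complex_of_real x = a*(z + inverse z)/2" unfolding inv complex_add_cnj re using a by simp
  show "\<i> * complex_of_real y = b*(z - inverse z)/2" unfolding inv complex_diff_cnj im using b by simp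
qed

lemma nonvanish:
  fixes z :: complex and t q :: real
  assumes z: "inverse z = cnj z" "z \<noteq> 0" and tq: "\<bar>t\<bar> < q"
  shows "complex_of_real t*(1+z^4) + 2*complex_of_real q*z^2 \<noteq> 0"
proof
  assume H: "complex_of_real t*(1+z^4) + 2*complex_of_real q*z^2 = 0"
  define w where "w = z^2"
  have w1: "w * cnj w = 1" unfolding w_def using z by (metis complex_cnj_power power_mult_distrib right_inverse power_one)
  have "cnj w * (complex_of_real t*(1+w^2) + 2*complex_of_real q*w) = 0" using H unfolding w_def by (simp add: power_mult[symmetric])
  hence "complex_of_real t*(cnj w + w*(w*cnj w)) + 2*complex_of_real q*(w*cnj w) = 0" by (simp add: algebra_simps power2_eq_square)
  hence "complex_of_real t*(w + cnj w) + 2*complex_of_real q = 0" unfolding w1 by (simp add: algebra_simps)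
  hence "complex_of_real (t*(2*Re w) + 2*q) = 0" unfolding complex_add_cnj by simp
  hence eq: "t * Re w = -q" by (simp only: of_real_eq_0_iff)
  have "(cmod w)^2 = 1" using complex_mod_mult_cnj[of w] w1 by simp
  hence "cmod w = 1" using norm_ge_zero[of w] by (auto simp: power2_eq_1_iff)
  hence "\<bar>Re w\<bar> \<le> 1" using abs_Re_le_cmod by metis
  hence "\<bar>t * Re w\<bar> \<le> \<bar>t\<bar>" by (simp add: abs_mult mult_left_le)
  thus False using eq tq by simp
qed

lemma circ_poly:
  fixes a b c z s1 s2 s3 :: complex
  assumes c: "c^2 = a^2 - b^2" and z: "z \<noteq> 0"
  shows "(a^2*(z+inverse z)^2 - b^2*(z-inverse z)^2)/4 - c^2*(s1+s3)*(z+inverse z)/8 - c^2*(s1-s3)*(z-inverse z)/8 + (c^2* s2 - 2*(a^2+b^2))/4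
     = c^2*(z^4 - s1*z^3 + s2*z^2 - s3*z + 1)/(4*z^2)"
proof -
  have "a^2 = c^2 + b^2" using c by simp
  thus ?thesis using z by (simp add: field_simps) (simp add: power2_eq_square algebra_simps eval_nat_numeral)
qed

lemma quartic:
  fixes z z1 z2 z3 z4 :: complex
  assumes "z1*z2*z3*z4 = 1"
  shows "z^4 - (z1+z2+z3+z4)*z^3 + (z1*z2+z1*z3+z1*z4+z2*z3+z2*z4+z3*z4)*z^2 - (z1*z2*z3+z1*z2*z4+z1*z3*z4+z2*z3*z4)*z + 1
       = (z-z1)*(z-z2)*(z-z3)*(z-z4)"
  using assms by algebra

lemma circ_real:
  fixes x y U V a b c d :: real and z s1 s2 s3 :: complex
  assumes z: "z \<noteq> 0" and a: "a \<noteq> 0" and b: "b \<noteq> 0" and c: "c^2 = a^2 - b^2"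
    and hx: "complex_of_real x = a*(z + inverse z)/2" and hy: "\<i> * complex_of_real y = b*(z - inverse z)/2"
    and hU: "2*complex_of_real U = s1 + s3" and hV: "2*\<i>*complex_of_real V = s1 - s3"
    and hK: "complex_of_real (-4*d) = c^2* s2 - 2*(a^2+b^2)"
  shows "complex_of_real (x^2 + y^2 - 2*(c^2*U/(4*a))*x - 2*(-(c^2*V/(4*b)))*y - d)
     = c^2*(z^4 - s1*z^3 + s2*z^2 - s3*z + 1)/(4*z^2)"
proof -
  define Yc where "Yc = \<i> * complex_of_real y"
  define Vc where "Vc = \<i> * complex_of_real V"
  have y2: "complex_of_real (y^2) = -(Yc^2)" unfolding Yc_def by (simp add: power2_eq_square algebra_simps)
  have vy: "complex_of_real (V*y) = -(Vc*Yc)" unfolding Yc_def Vc_def by (simp add: algebra_simps)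
  have "complex_of_real (x^2 + y^2 - 2*(c^2*U/(4*a))*x - 2*(-(c^2*V/(4*b)))*y - d)
     = (complex_of_real x)^2 + complex_of_real (y^2) - 2*(of_real c^2* of_real U/(4* of_real a))* of_real x + 2*(of_real c^2/(4* of_real b))* of_real (V*y) + of_real (-4*d)/4"
    by (simp add: algebra_simps)
  also have "\<dots> = (a^2*(z+inverse z)^2 - b^2*(z-inverse z)^2)/4 - c^2*(s1+s3)*(z+inverse z)/8 - c^2*(s1-s3)*(z-inverse z)/8 + (c^2* s2 - 2*(a^2+b^2))/4"
  proof -
    have U': "complex_of_real U = (s1+s3)/2" by (simp add: hU[symmetric])
    have V': "Vc = (s1-s3)/2" using hV unfolding Vc_def by (simp add: algebra_simps)
    have Y': "Yc = b*(z - inverse z)/2" using hy unfolding Yc_def .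
    show ?thesis unfolding y2 vy hx U' V' Y' hK using a b by (simp add: field_simps power2_eq_square)
  qed
  also have "\<dots> = c^2*(z^4 - s1*z^3 + s2*z^2 - s3*z + 1)/(4*z^2)"
  proof -
    have cc: "(complex_of_real c)^2 = (complex_of_real a)^2 - (complex_of_real b)^2" using c by (metis of_real_diff of_real_power)
    show ?thesis using circ_poly[OF cc z, of s1 s3 s2] by simp
  qed
  finally show ?thesis .
qed




lemma lam_expr:
  fixes a b x y xq yq :: real
  assumes a: "a > 0" and b: "b > 0" and e: "x\<^sup>2/a\<^sup>2 + y\<^sup>2/b\<^sup>2 = 1" and d: "(xq,yq) \<noteq> (x,y)"
  shows "lam a b (x,y) (xq,yq) = (a\<^sup>2+b\<^sup>2-x\<^sup>2-y\<^sup>2)/((x/a\<^sup>2)\<^sup>2 + (y/b\<^sup>2)\<^sup>2)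
           * (((xq - x)*(x/a\<^sup>2) + (yq - y)*(y/b\<^sup>2))/sqrt((xq-x)\<^sup>2+(yq-y)\<^sup>2))\<^sup>2"
proof -
  define D where "D = (xq-x)\<^sup>2+(yq-y)\<^sup>2"
  have D0: "D > 0" using d unfolding D_def by (auto simp: sum_power2_gt_zero_iff)
  have nn: "(x/a\<^sup>2)\<^sup>2 + (y/b\<^sup>2)\<^sup>2 > 0"
  proof -
    have "x \<noteq> 0 \<or> y \<noteq> 0" using e by auto
    thus ?thesis using a b by (auto simp: sum_power2_gt_zero_iff)
  qed
  have F: "(a\<^sup>2*(yq - y)\<^sup>2 + b\<^sup>2*(x - xq)\<^sup>2 - ((yq - y)*x + (x - xq)*y)\<^sup>2) * ((x/a\<^sup>2)\<^sup>2 + (y/b\<^sup>2)\<^sup>2)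
     = (a\<^sup>2+b\<^sup>2-x\<^sup>2-y\<^sup>2) * ((xq - x)*(x/a\<^sup>2) + (yq - y)*(y/b\<^sup>2))\<^sup>2"
    by (rule lam_formula[OF e a b])
  have Deq: "(yq - y)\<^sup>2 + (x - xq)\<^sup>2 = D" unfolding D_def by (simp add: power2_commute add.commute)
  define N where "N = a\<^sup>2*(yq - y)\<^sup>2 + b\<^sup>2*(x - xq)\<^sup>2 - ((yq - y)*x + (x - xq)*y)\<^sup>2"
  define nn where "nn = (x/a\<^sup>2)\<^sup>2 + (y/b\<^sup>2)\<^sup>2"
  define Mq where "Mq = (a\<^sup>2+b\<^sup>2-x\<^sup>2-y\<^sup>2) * ((xq - x)*(x/a\<^sup>2) + (yq - y)*(y/b\<^sup>2))\<^sup>2"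
  have F': "N*nn = Mq" using F unfolding N_def nn_def Mq_def .
  have nn0: "nn \<noteq> 0" unfolding nn_def using nn by linarith
  have "lam a b (x,y) (xq,yq) = N / D"
    unfolding lam_def Deq[symmetric] N_def by simp
  also have "\<dots> = Mq / (nn * D)"
    unfolding F'[symmetric] using nn0 by simp
  also have "\<dots> = (a\<^sup>2+b\<^sup>2-x\<^sup>2-y\<^sup>2)/((x/a\<^sup>2)\<^sup>2 + (y/b\<^sup>2)\<^sup>2)
           * (((xq - x)*(x/a\<^sup>2) + (yq - y)*(y/b\<^sup>2))/sqrt D)\<^sup>2"
    unfolding Mq_def nn_def using D0 by (simp add: power_divide)
  finally show ?thesis unfolding D_def .
qed

lemma bisect_lam:
  assumes a: "a > 0" and b: "b > 0" and e: "on_ellipse a b P" and dq: "Q \<noteq> P" and dr: "R \<noteq> P"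
    and bis: "normal_bisects a b P Q R"
  shows "lam a b P Q = lam a b P R"
proof -
  obtain x y where P: "P = (x,y)" by (cases P)
  obtain xq yq where Q: "Q = (xq,yq)" by (cases Q)
  obtain xr yr where R: "R = (xr,yr)" by (cases R)
  have e': "x\<^sup>2/a\<^sup>2 + y\<^sup>2/b\<^sup>2 = 1" using e P unfolding on_ellipse_def by simp
  have bis': "((xq - x)*(x/a\<^sup>2) + (yq - y)*(y/b\<^sup>2))/sqrt((xq-x)\<^sup>2+(yq-y)\<^sup>2)
      = ((xr - x)*(x/a\<^sup>2) + (yr - y)*(y/b\<^sup>2))/sqrt((xr-x)\<^sup>2+(yr-y)\<^sup>2)"
    using bis unfolding normal_bisects_def ellipse_normal_def P Q R by (simp add: norm_Pair)
  show ?thesis unfolding P Q R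
    using lam_expr[OF a b e', of xq yq] lam_expr[OF a b e', of xr yr] dq dr bis' P Q R by simp
qed

lemma lam_nonneg:
  assumes a: "a > 0" and b: "b > 0" and e: "on_ellipse a b P" and dq: "Q \<noteq> P"
  shows "lam a b P Q \<ge> 0"
proof -
  obtain x y where P: "P = (x,y)" by (cases P)
  obtain xq yq where Q: "Q = (xq,yq)" by (cases Q)
  have e': "x\<^sup>2/a\<^sup>2 + y\<^sup>2/b\<^sup>2 = 1" using e P unfolding on_ellipse_def by simp
  have "x\<^sup>2/a\<^sup>2 \<ge> 0" "y\<^sup>2/b\<^sup>2 \<ge> 0" by simp_all
  hence "x\<^sup>2/a\<^sup>2 \<le> 1" "y\<^sup>2/b\<^sup>2 \<le> 1" using e' by linarith+
  hence "x\<^sup>2 \<le> a\<^sup>2" "y\<^sup>2 \<le> b\<^sup>2" using a b by (simp_all add: divide_le_eq_1)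
  hence "a\<^sup>2+b\<^sup>2-x\<^sup>2-y\<^sup>2 \<ge> 0" by simp
  thus ?thesis unfolding P Q using lam_expr[OF a b e', of xq yq] dq P Q by simp
qed

lemma lam_mult:
  assumes "(xj,yj) \<noteq> (xi,yi)"
  shows "(yj - yi)\<^sup>2 + (xi - xj)\<^sup>2 \<noteq> 0"
    and "lam a b (xi,yi) (xj,yj) * ((yj - yi)\<^sup>2 + (xi - xj)\<^sup>2) = a\<^sup>2*(yj - yi)\<^sup>2 + b\<^sup>2*(xi - xj)\<^sup>2 - ((yj - yi)*xi + (xi - xj)*yi)\<^sup>2"
proof -
  show D: "(yj - yi)\<^sup>2 + (xi - xj)\<^sup>2 \<noteq> 0" using assms by (auto simp: sum_power2_eq_zero_iff)
  thus "lam a b (xi,yi) (xj,yj) * ((yj - yi)\<^sup>2 + (xi - xj)\<^sup>2) = a\<^sup>2*(yj - yi)\<^sup>2 + b\<^sup>2*(xi - xj)\<^sup>2 - ((yj - yi)*xi + (xi - xj)*yi)\<^sup>2"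
    unfolding lam_def by simp
qed

lemma t_formula:
  fixes a b c d l t q :: real
  assumes a: "a > 0" and b: "b > 0" and ab: "a > b" and c: "c\<^sup>2 = a\<^sup>2 - b\<^sup>2" and c0: "c > 0"
    and d: "d\<^sup>2 = a^4 - a\<^sup>2*b\<^sup>2 + b^4" and d0: "d \<ge> 0" and l: "l > 0"
    and t: "t = l*(1/a\<^sup>2 - 1/b\<^sup>2)" and q: "q = l*(1/a\<^sup>2 + 1/b\<^sup>2)" and cay: "t\<^sup>2 + 2*q = 3"
  shows "c\<^sup>2*t = a\<^sup>2 + b\<^sup>2 - 2*d"
proof -
  have qc: "c\<^sup>2*q = -t*(a\<^sup>2+b\<^sup>2)" unfolding t q c using a b by (simp add: field_simps)
  have "c\<^sup>2*(t\<^sup>2 + 2*q) = 3*c\<^sup>2" using cay by simp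
  hence "c\<^sup>2*t\<^sup>2 - 2*t*(a\<^sup>2+b\<^sup>2) = 3*c\<^sup>2" using qc by (simp add: algebra_simps)
  hence "(c\<^sup>2*t - (a\<^sup>2+b\<^sup>2))\<^sup>2 = (a\<^sup>2+b\<^sup>2)\<^sup>2 + 3*c\<^sup>2*c\<^sup>2"
    by (simp add: power2_eq_square algebra_simps)
  also have "\<dots> = (2*d)\<^sup>2" unfolding c using d by (simp add: power2_eq_square algebra_simps power4_eq_xxxx)
  finally have sq: "(c\<^sup>2*t - (a\<^sup>2+b\<^sup>2))\<^sup>2 = (2*d)\<^sup>2" .
  have "1/a\<^sup>2 < 1/b\<^sup>2" using a b ab by (simp add: divide_strict_left_mono power_strict_mono)
  hence "t < 0" unfolding t using l by (simp add: mult_pos_neg)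
  hence "c\<^sup>2*t < 0" using c0 by (simp add: mult_pos_neg)
  moreover have "a\<^sup>2+b\<^sup>2 > 0" using a by (simp add: add_pos_nonneg)
  ultimately have "c\<^sup>2*t - (a\<^sup>2+b\<^sup>2) < 0" by linarith
  hence "c\<^sup>2*t - (a\<^sup>2+b\<^sup>2) = -(2*d)" using sq d0 unfolding power2_eq_iff by auto
  thus ?thesis by simp
qed

lemma cross_nz:
  fixes z1 z2 z3 :: complex and a b x1 y1 x2 y2 x3 y3 :: real
  assumes nz: "z1 \<noteq> 0" "z2 \<noteq> 0" "z3 \<noteq> 0" and dz: "z1 \<noteq> z2" "z1 \<noteq> z3" "z2 \<noteq> z3"
    and inv: "inverse z1 = cnj z1" "inverse z2 = cnj z2" "inverse z3 = cnj z3"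
    and ab: "a \<noteq> 0" "b \<noteq> 0"
    and co: "x1 = a*Re z1" "y1 = b*Im z1" "x2 = a*Re z2" "y2 = b*Im z2" "x3 = a*Re z3" "y3 = b*Im z3"
  shows "(x2-x1)*(y3-y1) - (y2-y1)*(x3-x1) \<noteq> 0"
proof
  assume H: "(x2-x1)*(y3-y1) - (y2-y1)*(x3-x1) = 0"
  define w where "w = cnj(z2-z1)*(z3-z1)"
  have "(x2-x1)*(y3-y1) - (y2-y1)*(x3-x1) = a*b*Im w" unfolding w_def co by (simp add: algebra_simps)
  hence "Im w = 0" using H ab by simp
  hence "w - cnj w = 0" unfolding complex_diff_cnj by simp
  moreover have "w - cnj w = (z1-z2)*(z3-z1)*(z3-z2)/(z1*z2*z3)"
    unfolding w_def using nz by (simp add: inv[symmetric] field_simps)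
  ultimately show False using nz dz by simp
qed

lemma locus_real:
  fixes a b c d t U V X1 X2 :: real
  assumes a: "a \<noteq> 0" and b: "b \<noteq> 0" and c: "c \<noteq> 0"
    and L: "U\<^sup>2*(1-t)\<^sup>2 + V\<^sup>2*(1+t)\<^sup>2 = (1+t)\<^sup>2*(1-t)\<^sup>2"
    and tp: "c\<^sup>2*(1+t) = 2*(a\<^sup>2-d)" and tm: "c\<^sup>2*(1-t) = 2*(d-b\<^sup>2)"
    and X1: "X1 = c\<^sup>2*U/(4*a)" and X2: "X2 = -(c\<^sup>2*V/(4*b))"
  shows "4*a\<^sup>2*X1\<^sup>2*(d-b\<^sup>2)\<^sup>2 + 4*b\<^sup>2*X2\<^sup>2*(a\<^sup>2-d)\<^sup>2 = (a\<^sup>2-d)\<^sup>2*(d-b\<^sup>2)\<^sup>2"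
proof -
  have "(c\<^sup>2*U)\<^sup>2*(c\<^sup>2*(1-t))\<^sup>2 + (c\<^sup>2*V)\<^sup>2*(c\<^sup>2*(1+t))\<^sup>2 = (c\<^sup>2*(1+t))\<^sup>2*(c\<^sup>2*(1-t))\<^sup>2"
  proof -
    have "(c\<^sup>2*U)\<^sup>2*(c\<^sup>2*(1-t))\<^sup>2 + (c\<^sup>2*V)\<^sup>2*(c\<^sup>2*(1+t))\<^sup>2 = (c\<^sup>2)^4 * (U\<^sup>2*(1-t)\<^sup>2 + V\<^sup>2*(1+t)\<^sup>2)"
      by (simp add: power_mult_distrib algebra_simps power4_eq_xxxx power2_eq_square)
    also have "\<dots> = (c\<^sup>2)^4 * ((1+t)\<^sup>2*(1-t)\<^sup>2)" using L by simp
    also have "\<dots> = (c\<^sup>2*(1+t))\<^sup>2*(c\<^sup>2*(1-t))\<^sup>2" by (simp add: power_mult_distrib algebra_simps power4_eq_xxxx power2_eq_square)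
    finally show ?thesis .
  qed
  moreover have "c\<^sup>2*U = 4*a*X1" unfolding X1 using a by simp
  moreover have "c\<^sup>2*V = -4*b*X2" unfolding X2 using b by simp
  ultimately have "(4*a*X1)\<^sup>2*(2*(d-b\<^sup>2))\<^sup>2 + (-4*b*X2)\<^sup>2*(2*(a\<^sup>2-d))\<^sup>2 = (2*(a\<^sup>2-d))\<^sup>2*(2*(d-b\<^sup>2))\<^sup>2"
    unfolding tp tm by simp
  moreover have "(4*a*X1)\<^sup>2*(2*(d-b\<^sup>2))\<^sup>2 + (-4*b*X2)\<^sup>2*(2*(a\<^sup>2-d))\<^sup>2 = 16*(4*a\<^sup>2*X1\<^sup>2*(d-b\<^sup>2)\<^sup>2 + 4*b\<^sup>2*X2\<^sup>2*(a\<^sup>2-d)\<^sup>2)"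
    by (simp add: power2_eq_square algebra_simps)
  moreover have "(2*(a\<^sup>2-d))\<^sup>2*(2*(d-b\<^sup>2))\<^sup>2 = 16*((a\<^sup>2-d)\<^sup>2*(d-b\<^sup>2)\<^sup>2)"
    by (simp add: power2_eq_square algebra_simps)
  ultimately show ?thesis by simp
qed




lemma inv_coords:
  fixes c \<rho> x y :: real
  assumes n: "(x+c)\<^sup>2 + y\<^sup>2 \<noteq> 0"
  shows "invert (-c,0) \<rho> (x,y) = (-c + \<rho>^2*(x+c)/((x+c)^2+y^2), \<rho>^2*y/((x+c)^2+y^2))"
proof -
  have np: "(x+c)\<^sup>2 + y\<^sup>2 > 0" by (rule order_le_neq_trans[OF _ n[symmetric]]) simp
  have "dist (x,y) (-c,0) = sqrt ((x+c)\<^sup>2 + y\<^sup>2)" by (simp add: dist_Pair_Pair dist_real_def)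
  hence "(\<rho> / dist (x,y) (-c,0))\<^sup>2 = \<rho>^2/((x+c)^2+y^2)" using np by (simp add: power_divide)
  thus ?thesis unfolding invert_def by simp
qed

lemma dist_coords: "dist ((u::real),(v::real)) (p,q) = sqrt ((u-p)^2 + (v-q)^2)"
  by (simp add: dist_Pair_Pair dist_real_def)



theorem mainTheorem12:
  fixes a b \<rho> :: real and P1 P2 P3 X :: "real \<times> real"
  assumes "a > b" and "b > 0" and "\<rho> > 0"
    and "three_periodic a b P1 P2 P3"
    and "is_circumcenter X
           (invert (- sqrt (a\<^sup>2 - b\<^sup>2), 0) \<rho> P1)
           (invert (- sqrt (a\<^sup>2 - b\<^sup>2), 0) \<rho> P2)
           (invert (- sqrt (a\<^sup>2 - b\<^sup>2), 0) \<rho> P3)"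
  shows "dist X (- sqrt (a\<^sup>2 - b\<^sup>2) * (1 + \<rho>\<^sup>2 * (a\<^sup>2 + b\<^sup>2) / (2 * b ^ 4)), 0)
           = \<rho>\<^sup>2 * (a * (sqrt (a ^ 4 - a\<^sup>2 * b\<^sup>2 + b ^ 4) - b\<^sup>2)) / (2 * b ^ 4)"
proof -
  have ab: "a > b" and b0: "b > 0" and r0: "\<rho> > 0" using assms(1-3) .
  have a0: "a > 0" using ab b0 by simp
  have an: "a \<noteq> 0" and bn: "b \<noteq> 0" using a0 b0 by simp_all
  obtain x1 y1 where P1: "P1 = (x1,y1)" by (cases P1)
  obtain x2 y2 where P2: "P2 = (x2,y2)" by (cases P2)
  obtain x3 y3 where P3: "P3 = (x3,y3)" by (cases P3)
  obtain Xx Xy where XP: "X = (Xx,Xy)" by (cases X)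
  define c where "c = sqrt (a\<^sup>2 - b\<^sup>2)"
  define d where "d = sqrt (a ^ 4 - a\<^sup>2 * b\<^sup>2 + b ^ 4)"
  have ab2: "a\<^sup>2 - b\<^sup>2 > 0" using ab b0 by (simp add: power_strict_mono)
  have c0: "c > 0" unfolding c_def using ab2 by simp
  have c2: "c\<^sup>2 = a\<^sup>2 - b\<^sup>2" unfolding c_def using ab2 by simp
  have dpos: "a ^ 4 - a\<^sup>2 * b\<^sup>2 + b ^ 4 > 0"
  proof -
    have "a ^ 4 - a\<^sup>2 * b\<^sup>2 + b ^ 4 = a\<^sup>2*(a\<^sup>2 - b\<^sup>2) + b^4" by (simp add: power2_eq_square power4_eq_xxxx algebra_simps)
    moreover have "a\<^sup>2*(a\<^sup>2 - b\<^sup>2) > 0" using ab2 a0 by simp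
    moreover have "b^4 > 0" using b0 by simp
    ultimately show ?thesis by linarith
  qed
  have d0: "d \<ge> 0" unfolding d_def using less_imp_le[OF dpos] by simp
  have d2: "d\<^sup>2 = a ^ 4 - a\<^sup>2 * b\<^sup>2 + b ^ 4" unfolding d_def using less_imp_le[OF dpos] by simp
  have dgt: "d > b\<^sup>2"
  proof (rule ccontr)
    assume "\<not> d > b\<^sup>2"
    hence "d \<le> b\<^sup>2" by simp
    hence "d\<^sup>2 \<le> (b\<^sup>2)\<^sup>2" using power_mono[OF _ d0, of "b\<^sup>2" 2] by blast
    moreover have "d\<^sup>2 - (b\<^sup>2)\<^sup>2 = a\<^sup>2*(a\<^sup>2-b\<^sup>2)" unfolding d2 by (simp add: power2_eq_square power4_eq_xxxx algebra_simps)
    moreover have "a\<^sup>2*(a\<^sup>2 - b\<^sup>2) > 0" using ab2 a0 by simp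
    ultimately show False by linarith
  qed
  have dlt: "d < a\<^sup>2"
  proof (rule ccontr)
    assume "\<not> d < a\<^sup>2"
    hence "a\<^sup>2 \<le> d" by simp
    hence "(a\<^sup>2)\<^sup>2 \<le> d\<^sup>2" using power_mono[of "a\<^sup>2" d 2] by simp
    moreover have "(a\<^sup>2)\<^sup>2 - d\<^sup>2 = b\<^sup>2*(a\<^sup>2-b\<^sup>2)" unfolding d2 by (simp add: power2_eq_square power4_eq_xxxx algebra_simps)
    moreover have "b\<^sup>2*(a\<^sup>2 - b\<^sup>2) > 0" using ab2 b0 by simp
    ultimately show False by linarith
  qed
  have on1: "on_ellipse a b P1" and on2: "on_ellipse a b P2" and on3: "on_ellipse a b P3"
    and n12: "P1 \<noteq> P2" and n23: "P2 \<noteq> P3" and n13: "P1 \<noteq> P3"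
    and bis1: "normal_bisects a b P1 P2 P3" and bis2: "normal_bisects a b P2 P3 P1"
    using assms(4) unfolding three_periodic_def by auto
  have e1: "x1\<^sup>2/a\<^sup>2 + y1\<^sup>2/b\<^sup>2 = 1" using on1 P1 unfolding on_ellipse_def by simp
  have e2: "x2\<^sup>2/a\<^sup>2 + y2\<^sup>2/b\<^sup>2 = 1" using on2 P2 unfolding on_ellipse_def by simp
  have e3: "x3\<^sup>2/a\<^sup>2 + y3\<^sup>2/b\<^sup>2 = 1" using on3 P3 unfolding on_ellipse_def by simp
  \<comment> \<open>common caustic parameter\<close>
  define l where "l = lam a b P1 P2"
  have l13: "lam a b P1 P3 = l" unfolding l_def using bisect_lam[OF a0 b0 on1 _ _ bis1] n12 n13 by auto
  have l23: "lam a b P2 P3 = l"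
  proof -
    have "lam a b P2 P3 = lam a b P2 P1" using bisect_lam[OF a0 b0 on2 _ _ bis2] n23 n12 by auto
    thus ?thesis unfolding l_def using lam_sym by metis
  qed
  have l0: "l \<ge> 0" unfolding l_def using lam_nonneg[OF a0 b0 on1] n12 by auto
  define z1 where "z1 = Complex (x1/a) (y1/b)"
  define z2 where "z2 = Complex (x2/a) (y2/b)"
  define z3 where "z3 = Complex (x3/a) (y3/b)"
  note pc1 = pt_complex[OF a0 b0 e1, folded z1_def]
  note pc2 = pt_complex[OF a0 b0 e2, folded z2_def]
  note pc3 = pt_complex[OF a0 b0 e3, folded z3_def]
  have z10: "z1 \<noteq> 0" and z20: "z2 \<noteq> 0" and z30: "z3 \<noteq> 0" using pc1 pc2 pc3 by simp_all
  have dz12: "z1 \<noteq> z2"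
  proof
    assume "z1 = z2"
    hence "x1/a = x2/a" "y1/b = y2/b" using pc1(5,6) pc2(5,6) by metis+
    hence "x1 = x2" "y1 = y2" using an bn by simp_all
    thus False using n12 P1 P2 by simp
  qed
  have dz13: "z1 \<noteq> z3"
  proof
    assume "z1 = z3"
    hence "x1/a = x3/a" "y1/b = y3/b" using pc1(5,6) pc3(5,6) by metis+
    hence "x1 = x3" "y1 = y3" using an bn by simp_all
    thus False using n13 P1 P3 by simp
  qed
  have dz23: "z2 \<noteq> z3"
  proof
    assume "z2 = z3"
    hence "x2/a = x3/a" "y2/b = y3/b" using pc2(5,6) pc3(5,6) by metis+
    hence "x2 = x3" "y2 = y3" using an bn by simp_all
    thus False using n23 P2 P3 by simp
  qed
  define t where "t = l*(1/a\<^sup>2 - 1/b\<^sup>2)"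
  define q where "q = l*(1/a\<^sup>2 + 1/b\<^sup>2)"
  have Rgen: "(zi - zj)^2 + complex_of_real t*((zi*zj)^2+1) + 2*complex_of_real q*zi*zj = 0"
    if "lam a b (xi,yi) (xj,yj) = l" "(xj,yj) \<noteq> (xi,yi)" "zi \<noteq> 0" "zj \<noteq> 0"
      "complex_of_real xi = a*(zi + inverse zi)/2" "\<i> * complex_of_real yi = b*(zi - inverse zi)/2"
      "complex_of_real xj = a*(zj + inverse zj)/2" "\<i> * complex_of_real yj = b*(zj - inverse zj)/2"
    for xi yi xj yj :: real and zi zj :: complex
  proof -
    have "(zi - zj)^2 + complex_of_real t*((zi*zj)^2+1) + 2*complex_of_real q*(zi*zj) = 0"
      unfolding t_def q_def
      by (rule lam_complex[OF that(3,4,5,6,7,8) an bn lam_mult(1)[OF that(2)]])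
         (use lam_mult(2)[OF that(2), of a b] that(1) in simp)
    thus ?thesis by (simp only: mult.assoc)
  qed
  have R12: "(z1 - z2)^2 + complex_of_real t*((z1*z2)^2+1) + 2*complex_of_real q*z1*z2 = 0"
    by (rule Rgen[of x1 y1 x2 y2]) (use l_def P1 P2 n12 z10 z20 pc1 pc2 in auto)
  have R13: "(z1 - z3)^2 + complex_of_real t*((z1*z3)^2+1) + 2*complex_of_real q*z1*z3 = 0"
    by (rule Rgen[of x1 y1 x3 y3]) (use l13 P1 P3 n13 z10 z30 pc1 pc3 in auto)
  have R23: "(z2 - z3)^2 + complex_of_real t*((z2*z3)^2+1) + 2*complex_of_real q*z2*z3 = 0"
    by (rule Rgen[of x2 y2 x3 y3]) (use l23 P2 P3 n23 z20 z30 pc2 pc3 in auto)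
  have lpos: "l > 0"
  proof -
    have "l \<noteq> 0"
    proof
      assume "l = 0"
      hence "(z1 - z2)^2 = 0" using R12 unfolding t_def q_def by simp
      thus False using dz12 by simp
    qed
    thus ?thesis using l0 by simp
  qed
  have tq: "\<bar>t\<bar> < q"
  proof -
    have "q - t = 2*l/b\<^sup>2" unfolding t_def q_def by (simp add: algebra_simps)
    moreover have "q + t = 2*l/a\<^sup>2" unfolding t_def q_def by (simp add: algebra_simps)
    moreover have "2*l/b\<^sup>2 > 0" "2*l/a\<^sup>2 > 0" using lpos a0 b0 by simp_all
    ultimately show ?thesis by linarith
  qed
  note cc = cayley_core[OF R12 R13 R23 dz23]
  have nv: "complex_of_real t*(1+z1^4) + 2*complex_of_real q*z1^2 \<noteq> 0"
    by (rule nonvanish[OF pc1(2) z10 tq])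
  have cayc: "(complex_of_real t)^2 + 2*complex_of_real q = 3"
  proof -
    have "3 - 2*complex_of_real q - (complex_of_real t)^2 = 0" using cc(3) nv mult_eq_0_iff by blast
    thus ?thesis by algebra
  qed
  have cay: "t\<^sup>2 + 2*q = 3"
  proof -
    have "complex_of_real (t\<^sup>2 + 2*q) = complex_of_real 3" using cayc by simp
    thus ?thesis by (simp only: of_real_eq_iff)
  qed

  define tc where "tc = complex_of_real t"
  define qc where "qc = complex_of_real q"
  define A where "A = 1 + tc*z1^2"
  define C where "C = z1^2 + tc"
  have A0: "A \<noteq> 0"
  proof
    assume A0: "A = 0"
    hence A0': "1 + complex_of_real t * z1^2 = 0" unfolding A_def tc_def .
    have "2*z1*(qc - 1) = 0" using cc(1) unfolding A0' qc_def by simp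
    hence "qc = 1" using z10 by simp
    hence q1: "q = 1" unfolding qc_def by simp
    have "z1^2 + tc = 0" using cc(2) unfolding A0' tc_def by simp
    hence "z1^2 = -tc" by (simp add: eq_neg_iff_add_eq_0)
    hence "1 - tc^2 = 0" using A0 unfolding A_def by (simp add: power2_eq_square)
    hence "complex_of_real (1 - t^2) = 0" unfolding tc_def by simp
    hence "1 - t^2 = 0" by (simp only: of_real_eq_0_iff)
    hence "t^2 = 1" by simp
    hence "t = 1 \<or> t = -1" by (simp add: power2_eq_1_iff)
    thus False using tq q1 by auto
  qed
  have cc2: "A*(z2*z3) = C" using cc(2) unfolding A_def C_def tc_def .
  have C0: "C \<noteq> 0" using cc2 A0 z20 z30 by auto
  have cayc': "tc^2 + 2*qc = 3" using cayc unfolding tc_def qc_def .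
  have sv: "z2+z3 = -z1*(1-tc^2)/A" and pv: "z2*z3 = C/A"
    using sp_subst[OF cayc' _ cc(1)[folded tc_def qc_def] cc(2)[folded tc_def]] A0 unfolding A_def C_def by auto
  define s1 where "s1 = z1+z2+z3+1/(z1*z2*z3)"
  define s2 where "s2 = z1*z2+z1*z3+z1*(1/(z1*z2*z3))+z2*z3+z2*(1/(z1*z2*z3))+z3*(1/(z1*z2*z3))"
  define s3 where "s3 = z1*z2*z3+z1*z2*(1/(z1*z2*z3))+z1*z3*(1/(z1*z2*z3))+z2*z3*(1/(z1*z2*z3))"
  note ss = sig_sp[OF z10 z20 z30]
  have "s1 = z1 + (z2+z3) + 1/(z1*(z2*z3))" unfolding s1_def by (rule ss(1))
  hence s1v: "s1 = z1 + (-z1*(1-tc^2)/A) + 1/(z1*(C/A))" unfolding sv pv .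
  have "s2 = z1*(z2+z3) + z2*z3 + (z1 + (z2+z3))/(z1*(z2*z3))" unfolding s2_def by (rule ss(2))
  hence s2v: "s2 = z1*(-z1*(1-tc^2)/A) + C/A + (z1 + (-z1*(1-tc^2)/A))/(z1*(C/A))" unfolding sv pv .
  have "s3 = z1*(z2*z3) + (z2+z3)/(z2*z3) + 1/z1" unfolding s3_def by (rule ss(3))
  hence s3v: "s3 = z1*(C/A) + (-z1*(1-tc^2)/A)/(C/A) + 1/z1" unfolding sv pv .
  have s2t: "s2 = 2*tc" using sig2[OF A0 C0 z10 A_def C_def] s2v by simp
  have s1n: "s1 = (1 + tc*(2+tc^2)*z1^2 + 3*tc^2*z1^4 + tc*z1^6)/(z1*(A*C))" using uval[OF A0 C0 z10 A_def C_def] s1v by simp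
  have s3n: "s3 = (z1^6 + tc*(2+tc^2)*z1^4 + 3*tc^2*z1^2 + tc)/(z1*(A*C))" using vval[OF A0 C0 z10 A_def C_def] s3v by simp
  have ups: "s1 + s3 = (1+tc)*(1+z1^2)*(z1^4+(tc^2+2*tc-1)*z1^2+1)/(z1*(A*C))"
    unfolding s1n s3n by (rule upv)
  have ums: "s1 - s3 = (1-tc)*(1-z1^2)*(z1^4+(1+2*tc-tc^2)*z1^2+1)/(z1*(A*C))"
    unfolding s1n s3n by (rule umv)
  have G0: "z1*(A*C) \<noteq> 0" using z10 A0 C0 by simp
  have lp: "((1+z1^2)*(z1^4+(tc^2+2*tc-1)*z1^2+1))^2 - ((1-z1^2)*(z1^4+(1+2*tc-tc^2)*z1^2+1))^2 = 4*z1^2*(A*C)^2"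
    using locus_poly[of z1 tc] unfolding A_def C_def .
  define F1 where "F1 = (1+z1^2)*(z1^4+(tc^2+2*tc-1)*z1^2+1)"
  define F2 where "F2 = (1-z1^2)*(z1^4+(1+2*tc-tc^2)*z1^2+1)"
  define G where "G = z1*(A*C)"
  have ups': "s1+s3 = (1+tc)*F1/G" unfolding ups F1_def G_def by (simp add: mult.assoc)
  have ums': "s1-s3 = (1-tc)*F2/G" unfolding ums F2_def G_def by (simp add: mult.assoc)
  have lp': "F1^2 - F2^2 = 4*z1^2*(A*C)^2" using lp unfolding F1_def F2_def .
  have lc: "(s1+s3)^2*(1-tc)^2 - (s1-s3)^2*(1+tc)^2 = 4*(1+tc)^2*(1-tc)^2"
  proof -
    have "(s1+s3)^2*(1-tc)^2 - (s1-s3)^2*(1+tc)^2 = (1+tc)^2*(1-tc)^2*(F1^2 - F2^2)/G^2"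
      unfolding ups' ums' using G0 unfolding G_def[symmetric] by (simp add: power_divide power_mult_distrib) (simp add: field_simps)
    also have "\<dots> = (1+tc)^2*(1-tc)^2*(4*z1^2*(A*C)^2)/(z1*(A*C))^2" unfolding lp' G_def ..
    also have "\<dots> = 4*(1+tc)^2*(1-tc)^2" using G0 by (simp add: power_mult_distrib)
    finally show ?thesis .
  qed
  have cs: "cnj s1 = s3"
  proof -
    have "cnj s1 = cnj z1 + cnj z2 + cnj z3 + 1/(cnj z1*cnj z2*cnj z3)" unfolding s1_def by simp
    also have "\<dots> = inverse z1 + inverse z2 + inverse z3 + 1/(inverse z1*inverse z2*inverse z3)" using pc1(2) pc2(2) pc3(2) by simp
    also have "\<dots> = s3" unfolding s3_def using z10 z20 z30 by (simp add: field_simps)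
    finally show ?thesis .
  qed
  define U where "U = Re s1"
  define V where "V = Im s1"
  have hU: "2*complex_of_real U = s1 + s3" unfolding cs[symmetric] complex_add_cnj U_def by simp
  have hV: "2*\<i>*complex_of_real V = s1 - s3" unfolding cs[symmetric] complex_diff_cnj V_def by simp
  have locU: "U\<^sup>2*(1-t)\<^sup>2 + V\<^sup>2*(1+t)\<^sup>2 = (1+t)\<^sup>2*(1-t)\<^sup>2"
  proof -
    have "complex_of_real (4*(U\<^sup>2*(1-t)\<^sup>2 + V\<^sup>2*(1+t)\<^sup>2)) = (2*complex_of_real U)^2*(1-tc)^2 - (2*\<i>*complex_of_real V)^2*(1+tc)^2"
      unfolding tc_def by (simp add: power_mult_distrib algebra_simps)
    also have "\<dots> = 4*(1+tc)^2*(1-tc)^2" unfolding hU hV by (rule lc)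
    also have "\<dots> = complex_of_real (4*((1+t)\<^sup>2*(1-t)\<^sup>2))" unfolding tc_def by simp
    finally have "complex_of_real (4*(U\<^sup>2*(1-t)\<^sup>2 + V\<^sup>2*(1+t)\<^sup>2)) = complex_of_real (4*((1+t)\<^sup>2*(1-t)\<^sup>2))" .
    thus ?thesis by (simp only: of_real_eq_iff) simp
  qed
  have ct: "c\<^sup>2*t = a\<^sup>2 + b\<^sup>2 - 2*d" by (rule t_formula[OF a0 b0 ab c2 c0 d2 d0 lpos t_def q_def cay])
  have tp: "c\<^sup>2*(1+t) = 2*(a\<^sup>2-d)"
  proof -
    have "c\<^sup>2*(1+t) = c\<^sup>2 + c\<^sup>2*t" by (simp add: algebra_simps)
    also have "\<dots> = (a\<^sup>2-b\<^sup>2) + (a\<^sup>2 + b\<^sup>2 - 2*d)" using ct c2 by metis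
    finally show ?thesis by simp
  qed
  have tm: "c\<^sup>2*(1-t) = 2*(d-b\<^sup>2)"
  proof -
    have "c\<^sup>2*(1-t) = c\<^sup>2 - c\<^sup>2*t" by (simp add: algebra_simps)
    also have "\<dots> = (a\<^sup>2-b\<^sup>2) - (a\<^sup>2 + b\<^sup>2 - 2*d)" using ct c2 by metis
    finally show ?thesis by simp
  qed
  define X1t where "X1t = c\<^sup>2*U/(4*a)"
  define X2t where "X2t = -(c\<^sup>2*V/(4*b))"
  have locX: "4*a\<^sup>2*X1t\<^sup>2*(d-b\<^sup>2)\<^sup>2 + 4*b\<^sup>2*X2t\<^sup>2*(a\<^sup>2-d)\<^sup>2 = (a\<^sup>2-d)\<^sup>2*(d-b\<^sup>2)\<^sup>2"
    by (rule locus_real[OF an bn _ locU tp tm X1t_def X2t_def]) (use c0 in simp)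
  have hK: "complex_of_real (-4*d) = c^2* s2 - 2*(a^2+b^2)"
  proof -
    have "-4*d = c^2*(2*t) - 2*(a^2+b^2)" using ct by (simp add: algebra_simps)
    hence "complex_of_real (-4*d) = complex_of_real (c^2*(2*t) - 2*(a^2+b^2))" by simp
    thus ?thesis unfolding s2t tc_def by simp
  qed
  have Q: "z^4 - s1*z^3 + s2*z^2 - s3*z + 1 = (z-z1)*(z-z2)*(z-z3)*(z-1/(z1*z2*z3))" for z
    unfolding s1_def s2_def s3_def by (rule quartic) (use z10 z20 z30 in simp)
  have circ: "xk^2 + yk^2 - 2*X1t*xk - 2*X2t*yk - d = 0"
    if "zk = z1 \<or> zk = z2 \<or> zk = z3" "zk \<noteq> 0" "complex_of_real xk = a*(zk + inverse zk)/2"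
       "\<i> * complex_of_real yk = b*(zk - inverse zk)/2" for xk yk :: real and zk :: complex
  proof -
    have "complex_of_real (xk^2 + yk^2 - 2*(c^2*U/(4*a))*xk - 2*(-(c^2*V/(4*b)))*yk - d)
       = c^2*(zk^4 - s1*zk^3 + s2*zk^2 - s3*zk + 1)/(4*zk^2)"
      by (rule circ_real[OF that(2) an bn _ that(3) that(4) hU hV hK]) (use c2 in simp)
    also have "zk^4 - s1*zk^3 + s2*zk^2 - s3*zk + 1 = 0" unfolding Q using that(1) by auto
    finally have "complex_of_real (xk^2 + yk^2 - 2*(c^2*U/(4*a))*xk - 2*(-(c^2*V/(4*b)))*yk - d) = 0" by simp
    hence "xk^2 + yk^2 - 2*(c^2*U/(4*a))*xk - 2*(-(c^2*V/(4*b)))*yk - d = 0" by (simp only: of_real_eq_0_iff)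
    thus ?thesis unfolding X1t_def X2t_def by simp
  qed
  have circ1: "x1^2 + y1^2 - 2*X1t*x1 - 2*X2t*y1 - d = 0" by (rule circ) (use pc1 in auto)
  have circ2: "x2^2 + y2^2 - 2*X1t*x2 - 2*X2t*y2 - d = 0" by (rule circ) (use pc2 in auto)
  have circ3: "x3^2 + y3^2 - 2*X1t*x3 - 2*X2t*y3 - d = 0" by (rule circ) (use pc3 in auto)

  have crP: "(x2-x1)*(y3-y1) - (y2-y1)*(x3-x1) \<noteq> 0"
    by (rule cross_nz[OF z10 z20 z30 dz12 dz13 dz23 pc1(2) pc2(2) pc3(2) an bn])
       (use pc1(5,6) pc2(5,6) pc3(5,6) an bn in simp_all)
  have nf: "(x+c)^2 + y^2 \<noteq> 0" if ex: "x\<^sup>2/a\<^sup>2 + y\<^sup>2/b\<^sup>2 = 1" for x y :: real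
  proof
    assume "(x+c)^2 + y^2 = 0"
    hence "x + c = 0" "y = 0" by (simp_all add: sum_power2_eq_zero_iff)
    hence "x = -c" "y = 0" by simp_all
    hence "c\<^sup>2/a\<^sup>2 = 1" using ex c0 by simp
    hence "c\<^sup>2 = a\<^sup>2" using an by (simp add: field_simps)
    thus False using c2 b0 by simp
  qed
  have nf1: "(x1+c)^2 + y1^2 \<noteq> 0" by (rule nf[OF e1])
  have nf2: "(x2+c)^2 + y2^2 \<noteq> 0" by (rule nf[OF e2])
  have nf3: "(x3+c)^2 + y3^2 \<noteq> 0" by (rule nf[OF e3])
  define pw where "pw = c\<^sup>2 + 2*c*X1t - d"
  have qc: "(x+c)^2 + y^2 - 2*(X1t+c)*(x+c) - 2*X2t*y + pw = 0"
    if "x^2 + y^2 - 2*X1t*x - 2*X2t*y - d = 0" for x y :: real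
  proof -
    have "(x+c)^2 + y^2 - 2*(X1t+c)*(x+c) - 2*X2t*y + pw = x^2 + y^2 - 2*X1t*x - 2*X2t*y - d"
      unfolding pw_def by (simp add: power2_eq_square algebra_simps)
    thus ?thesis using that by simp
  qed
  have qd12: "(x1+c, y1) \<noteq> (x2+c, y2)" using n12 P1 P2 by auto
  have qd13: "(x1+c, y1) \<noteq> (x3+c, y3)" using n13 P1 P3 by auto
  have qd23: "(x2+c, y2) \<noteq> (x3+c, y3)" using n23 P2 P3 by auto
  have crq: "((x2+c)-(x1+c))*(y3-y1) - (y2-y1)*((x3+c)-(x1+c)) \<noteq> 0" using crP by simp
  have cc0: "dist X (invert (-c,0) \<rho> P1) = dist X (invert (-c,0) \<rho> P2) \<and> dist X (invert (-c,0) \<rho> P2) = dist X (invert (-c,0) \<rho> P3)"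
    using assms(5) unfolding is_circumcenter_def c_def .
  have dsimp: "u - (-c + r) = u + c - r" for u r :: real by simp
  have dk: "dist X (invert (-c,0) \<rho> (xk,yk)) = sqrt ((Xx + c - \<rho>^2*(xk+c)/((xk+c)^2+yk^2))^2 + (Xy - \<rho>^2*yk/((xk+c)^2+yk^2))^2)"
    if "(xk+c)^2 + yk^2 \<noteq> 0" for xk yk :: real
    unfolding XP inv_coords[OF that] dist_coords dsimp ..
  have E12: "(Xx + c - \<rho>^2*(x1+c)/((x1+c)^2+y1^2))^2 + (Xy - \<rho>^2*y1/((x1+c)^2+y1^2))^2
           = (Xx + c - \<rho>^2*(x2+c)/((x2+c)^2+y2^2))^2 + (Xy - \<rho>^2*y2/((x2+c)^2+y2^2))^2"
    using cc0 unfolding P1 P2 P3 dk[OF nf1] dk[OF nf2] dk[OF nf3] by simp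
  have E13: "(Xx + c - \<rho>^2*(x1+c)/((x1+c)^2+y1^2))^2 + (Xy - \<rho>^2*y1/((x1+c)^2+y1^2))^2
           = (Xx + c - \<rho>^2*(x3+c)/((x3+c)^2+y3^2))^2 + (Xy - \<rho>^2*y3/((x3+c)^2+y3^2))^2"
    using cc0 unfolding P1 P2 P3 dk[OF nf1] dk[OF nf2] dk[OF nf3] by simp
  have IC: "pw \<noteq> 0 \<and> Xx + c = \<rho>^2*(X1t+c)/pw \<and> Xy = \<rho>^2*X2t/pw"
    by (rule inv_core[OF r0 nf1 nf2 nf3 qc[OF circ1] qc[OF circ2] qc[OF circ3] qd12 qd13 qd23 crq E12 E13])
  hence pw0: "pw \<noteq> 0" and xr: "Xx + c = \<rho>^2*(X1t+c)/pw" and yr: "Xy = \<rho>^2*X2t/pw" by auto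
  have FA: "((2*b^4)*(X1t+c) + c*(a^2+b^2)*(c^2 + 2*c*X1t - d))^2 + (2*b^4)^2*X2t^2 = (a*(d-b^2))^2*(c^2 + 2*c*X1t - d)^2"
    by (rule final_alg) (use c2 d2 bn dlt locX in auto)
  define Cx where "Cx = - c * (1 + \<rho>\<^sup>2 * (a\<^sup>2 + b\<^sup>2) / (2 * b ^ 4))"
  define Rt where "Rt = \<rho>\<^sup>2 * (a * (d - b\<^sup>2)) / (2 * b ^ 4)"
  have Rt0: "Rt \<ge> 0" unfolding Rt_def using a0 dgt by simp
  have ex: "Xx - Cx = (\<rho>^2/(2*b^4*pw)) * ((2*b^4)*(X1t+c) + c*(a^2+b^2)*pw)"
  proof -
    have "Xx - Cx = (Xx + c) + c*\<rho>\<^sup>2*(a\<^sup>2+b\<^sup>2)/(2*b^4)" unfolding Cx_def using bn by (simp add: field_simps)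
    also have "\<dots> = \<rho>^2*(X1t+c)/pw + c*\<rho>\<^sup>2*(a\<^sup>2+b\<^sup>2)/(2*b^4)" unfolding xr ..
    also have "\<dots> = (\<rho>^2/(2*b^4*pw)) * ((2*b^4)*(X1t+c) + c*(a^2+b^2)*pw)" using pw0 bn by (simp add: field_simps)
    finally show ?thesis .
  qed
  have ey: "Xy = (\<rho>^2/(2*b^4*pw)) * ((2*b^4)*X2t)" unfolding yr using bn by simp
  have key: "(Xx - Cx)^2 + (Xy - 0)^2 = Rt^2"
  proof -
    define K where "K = \<rho>^2/(2*b^4*pw)"
    define N1 where "N1 = (2*b^4)*(X1t+c) + c*(a^2+b^2)*pw"
    define N2 where "N2 = (2*b^4)*X2t"
    have "(Xx - Cx)^2 + (Xy - 0)^2 = (K*N1)^2 + (K*N2)^2" unfolding K_def N1_def N2_def ex ey by simp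
    also have "\<dots> = K^2*(N1^2 + N2^2)" by (simp add: power_mult_distrib algebra_simps)
    also have "\<dots> = (\<rho>^2/(2*b^4*pw))^2 * (((2*b^4)*(X1t+c) + c*(a^2+b^2)*pw)^2 + (2*b^4)^2*X2t^2)"
      unfolding K_def N1_def N2_def by (simp add: power_mult_distrib)
    also have "\<dots> = (\<rho>^2/(2*b^4*pw))^2 * ((a*(d-b^2))^2*pw^2)" using FA unfolding pw_def by simp
    also have "\<dots> = Rt^2" unfolding Rt_def using pw0 bn by (simp add: power_mult_distrib power_divide field_simps) (simp add: power2_eq_square power4_eq_xxxx algebra_simps)
    finally show ?thesis .
  qed
  have "dist X (Cx, 0) = Rt"
    unfolding XP dist_coords key using Rt0 by simp
  thus ?thesis unfolding Cx_def Rt_def c_def d_def .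
qed


end
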